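(* Let $\{F_x : x\in V(G)\}$ be a representation of a restricted frame graph $G$, and let $u,v\in V(G)$ be such that $F_u$ is inside $F_v$. Then for every vertex $w$ in the connected component of $G-N[v]$ containing $u$, the frame $F_w$ is inside $F_v$.
   Context: $N[v]=\{v\}\cup N(v)$. A frame is the boundary of an axis-parallel box $I\times J\subset\mathbb R^2$. A representation of a graph $G$ as a restricted frame graph is a family of frames $\{F_x : x\in V(G)\}$ with $xy\in E(G)$ iff $F_x\cap F_y\neq\emptyset$, satisfying: (1) corners of a frame do not coincide with any point of another frame; (2) the left side of any frame does not intersect any other frame; (3) if the right side of a frame intersects a second frame, this right side intersects both the top and the bottom side of the second frame; (4) if two frames have non-empty intersection, then no frame is entirely contained in the intersection of the two regions bounded by these two frames. $F_2$ is inside $F_1$ if $F_1\cap F_2=\emptyset$ and $F_2$ lies in the region bounded by $F_1$. *)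

theory Defs
  imports Main "HOL-Library.Product_Plus" Complex_Main
begin

text \<open>A frame is the boundary of a non-degenerate axis-parallel box
  [xl,xr] x [yb,yt] in the plane (points are pairs of reals).\<close>

record frame =
  xl :: real
  xr :: real
  yb :: real
  yt :: real

definition valid_frame :: "frame \<Rightarrow> bool" where
  "valid_frame f \<longleftrightarrow> xl f < xr f \<and> yb f < yt f"

definition region :: "frame \<Rightarrow> (real \<times> real) set" where
  "region f = {xl f..xr f} \<times> {yb f..yt f}"

definition frame_set :: "frame \<Rightarrow> (real \<times> real) set" where
  "frame_set f = {p \<in> region f. fst p = xl f \<or> fst p = xr f \<or> snd p = yb f \<or> snd p = yt f}"

definition left_side :: "frame \<Rightarrow> (real \<times> real) set" where
  "left_side f = {xl f} \<times> {yb f..yt f}"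

definition right_side :: "frame \<Rightarrow> (real \<times> real) set" where
  "right_side f = {xr f} \<times> {yb f..yt f}"

definition bottom_side :: "frame \<Rightarrow> (real \<times> real) set" where
  "bottom_side f = {xl f..xr f} \<times> {yb f}"

definition top_side :: "frame \<Rightarrow> (real \<times> real) set" where
  "top_side f = {xl f..xr f} \<times> {yt f}"

definition corners :: "frame \<Rightarrow> (real \<times> real) set" where
  "corners f = {xl f, xr f} \<times> {yb f, yt f}"

definition inside :: "frame \<Rightarrow> frame \<Rightarrow> bool" where
  "inside f2 f1 \<longleftrightarrow> frame_set f1 \<inter> frame_set f2 = {} \<and> frame_set f2 \<subseteq> region f1"

definition simple_graph :: "'a set \<Rightarrow> ('a \<Rightarrow> 'a \<Rightarrow> bool) \<Rightarrow> bool" where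
  "simple_graph V E \<longleftrightarrow> finite V \<and> (\<forall>x y. E x y \<longrightarrow> x \<in> V \<and> y \<in> V)
     \<and> (\<forall>x y. E x y \<longrightarrow> E y x) \<and> (\<forall>x. \<not> E x x)"

definition restricted_frame_rep :: "'a set \<Rightarrow> ('a \<Rightarrow> 'a \<Rightarrow> bool) \<Rightarrow> ('a \<Rightarrow> frame) \<Rightarrow> bool" where
  "restricted_frame_rep V E F \<longleftrightarrow>
     (\<forall>x\<in>V. valid_frame (F x)) \<and>
     (\<forall>x\<in>V. \<forall>y\<in>V. x \<noteq> y \<longrightarrow> (E x y \<longleftrightarrow> frame_set (F x) \<inter> frame_set (F y) \<noteq> {})) \<and>
     \<comment> \<open>(1) corners of a frame do not lie on another frame\<close>
     (\<forall>x\<in>V. \<forall>y\<in>V. x \<noteq> y \<longrightarrow> corners (F x) \<inter> frame_set (F y) = {}) \<and>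
     \<comment> \<open>(2) the left side of a frame does not meet any other frame\<close>
     (\<forall>x\<in>V. \<forall>y\<in>V. x \<noteq> y \<longrightarrow> left_side (F x) \<inter> frame_set (F y) = {}) \<and>
     \<comment> \<open>(3) a right side meeting another frame meets its top and bottom sides\<close>
     (\<forall>x\<in>V. \<forall>y\<in>V. x \<noteq> y \<longrightarrow> right_side (F x) \<inter> frame_set (F y) \<noteq> {} \<longrightarrow>
         right_side (F x) \<inter> top_side (F y) \<noteq> {} \<and> right_side (F x) \<inter> bottom_side (F y) \<noteq> {}) \<and>
     \<comment> \<open>(4) no frame lies in the intersection of the regions of two intersecting frames\<close>
     (\<forall>x\<in>V. \<forall>y\<in>V. x \<noteq> y \<longrightarrow> frame_set (F x) \<inter> frame_set (F y) \<noteq> {} \<longrightarrow>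
         (\<forall>z\<in>V. \<not> frame_set (F z) \<subseteq> region (F x) \<inter> region (F y)))"

definition closed_nbhd :: "'a set \<Rightarrow> ('a \<Rightarrow> 'a \<Rightarrow> bool) \<Rightarrow> 'a \<Rightarrow> 'a set" where
  "closed_nbhd V E v = {v} \<union> {y \<in> V. E v y}"

definition same_comp_minus :: "'a set \<Rightarrow> ('a \<Rightarrow> 'a \<Rightarrow> bool) \<Rightarrow> 'a set \<Rightarrow> 'a \<Rightarrow> 'a \<Rightarrow> bool" where
  "same_comp_minus V E S u w \<longleftrightarrow> u \<in> V - S \<and> w \<in> V - S \<and>
     (\<lambda>a b. E a b \<and> a \<in> V - S \<and> b \<in> V - S)\<^sup>*\<^sup>* u w"

end

theory Submission
  imports Defs
begin

lemma geo_raw: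
  fixes a b c d p q r s x0 y0 :: real
  assumes "a<b" "c<d" "p<q" "r<s"
  and z: "a\<le>x0" "x0\<le>b" "c\<le>y0" "y0\<le>d" "x0=a \<or> x0=b \<or> y0=c \<or> y0=d"
  and zr: "p\<le>x0" "x0\<le>q" "r\<le>y0" "y0\<le>s"
  and H: "\<And>x y. a\<le>x \<Longrightarrow> x\<le>b \<Longrightarrow> c\<le>y \<Longrightarrow> y\<le>d \<Longrightarrow> (x=a \<or> x=b \<or> y=c \<or> y=d) \<Longrightarrow>
       p\<le>x \<Longrightarrow> x\<le>q \<Longrightarrow> r\<le>y \<Longrightarrow> y\<le>s \<Longrightarrow> (x=p \<or> x=q \<or> y=r \<or> y=s) \<Longrightarrow> False"
  shows "p \<le> a \<and> b \<le> q \<and> r \<le> c \<and> d \<le> s"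
proof -
  have "\<And>x y. x \<in> {a,b,p,q,x0} \<Longrightarrow> y \<in> {c,d,r,s,y0} \<Longrightarrow> a\<le>x \<Longrightarrow> x\<le>b \<Longrightarrow> c\<le>y \<Longrightarrow> y\<le>d \<Longrightarrow> (x=a \<or> x=b \<or> y=c \<or> y=d) \<Longrightarrow>
       p\<le>x \<Longrightarrow> x\<le>q \<Longrightarrow> r\<le>y \<Longrightarrow> y\<le>s \<Longrightarrow> (x=p \<or> x=q \<or> y=r \<or> y=s) \<Longrightarrow> False" using H by blast
  then show ?thesis using assms(1-4) z zr
    apply (simp only: insert_iff empty_iff simp_thms)
    by (smt (verit))
qed

lemma geo:
  assumes vx: "valid_frame X" and vv: "valid_frame Vf"
    and zx: "z \<in> frame_set X" and zr: "z \<in> region Vf"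
    and dj: "frame_set X \<inter> frame_set Vf = {}"
  shows "frame_set X \<subseteq> region Vf"
proof -
  obtain x0 y0 where zz: "z = (x0,y0)" by (cases z)
  have "xl Vf \<le> xl X \<and> xr X \<le> xr Vf \<and> yb Vf \<le> yb X \<and> yt X \<le> yt Vf"
  proof (rule geo_raw[of "xl X" "xr X" "yb X" "yt X" "xl Vf" "xr Vf" "yb Vf" "yt Vf" x0 y0])
    fix x y
    assume "xl X \<le> x" "x \<le> xr X" "yb X \<le> y" "y \<le> yt X"
      "x = xl X \<or> x = xr X \<or> y = yb X \<or> y = yt X"
      "xl Vf \<le> x" "x \<le> xr Vf" "yb Vf \<le> y" "y \<le> yt Vf"
      "x = xl Vf \<or> x = xr Vf \<or> y = yb Vf \<or> y = yt Vf"
    then have "(x,y) \<in> frame_set X \<inter> frame_set Vf"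
      by (auto simp: frame_set_def region_def)
    then show False using dj by blast
  qed (use vx vv zx zr zz in \<open>auto simp: valid_frame_def frame_set_def region_def\<close>)
  then show ?thesis by (auto simp: frame_set_def region_def)
qed

theorem corollary3p6:
  fixes V :: "'a set" and E :: "'a \<Rightarrow> 'a \<Rightarrow> bool" and F :: "'a \<Rightarrow> frame"
  assumes "simple_graph V E"
    and "restricted_frame_rep V E F"
    and "u \<in> V" and "v \<in> V"
    and "inside (F u) (F v)"
  shows "\<forall>w. same_comp_minus V E (closed_nbhd V E v) u w \<longrightarrow> inside (F w) (F v)"
  proof (intro allI impI)
  fix w
  assume sc: "same_comp_minus V E (closed_nbhd V E v) u w"
  let ?S = "closed_nbhd V E v"
  from sc have "(\<lambda>a b. E a b \<and> a \<in> V - ?S \<and> b \<in> V - ?S)\<^sup>*\<^sup>* u w"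
    by (simp add: same_comp_minus_def)
  then show "inside (F w) (F v)"
  proof (induction rule: rtranclp_induct)
    case base
    then show ?case using assms(5) .
  next
    case (step y x)
    have rep: "restricted_frame_rep V E F" by fact
    from step.hyps(2) have Eyx: "E y x" and yV: "y \<in> V" and xV: "x \<in> V"
      and xS: "x \<notin> ?S" by auto
    have xv: "x \<noteq> v" and nE: "\<not> E v x" using xS xV by (auto simp: closed_nbhd_def)
    have yx: "y \<noteq> x" using Eyx assms(1) by (auto simp: simple_graph_def)
    have "frame_set (F v) \<inter> frame_set (F x) = {}"
    proof -
      have "\<forall>x\<in>V. \<forall>y\<in>V. x \<noteq> y \<longrightarrow> (E x y \<longleftrightarrow> frame_set (F x) \<inter> frame_set (F y) \<noteq> {})"
        using rep unfolding restricted_frame_rep_def by blast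
      then show ?thesis using xV assms(4) xv nE by metis
    qed
    then have dj: "frame_set (F x) \<inter> frame_set (F v) = {}" by blast
    have "frame_set (F y) \<inter> frame_set (F x) \<noteq> {}"
    proof -
      have "\<forall>x\<in>V. \<forall>y\<in>V. x \<noteq> y \<longrightarrow> (E x y \<longleftrightarrow> frame_set (F x) \<inter> frame_set (F y) \<noteq> {})"
        using rep unfolding restricted_frame_rep_def by blast
      then show ?thesis using xV yV yx Eyx by metis
    qed
    then obtain z where z1: "z \<in> frame_set (F x)" and z2: "z \<in> frame_set (F y)" by blast
    have zr: "z \<in> region (F v)" using step.IH z2 by (auto simp: inside_def)
    have "frame_set (F x) \<subseteq> region (F v)"
      by (rule geo[OF _ _ z1 zr dj]) (use rep xV assms(4) in \<open>auto simp: restricted_frame_rep_def\<close>)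
    then show ?case using dj by (auto simp: inside_def)
  qed
qed

end
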